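(* Let $E$ be a finite directed graph containing at least one nontrivial cycle (a path $\mu$ of positive length with $s(\mu)=r(\mu)$). Then $$\log\rho(A_E)=\max_{v\in E^0}\beta_v=\max\{\dim\partial T(E,v): v\in E^0,\ E^*v\text{ infinite}\}.$$
   Context: For a finite directed graph $E$, $A_E=[|vE^1w|]_{v,w\in E^0}$ is the adjacency matrix ($vE^1w$ the set of edges from $v$ to $w$) and $\rho(A_E)$ its spectral radius. $E^nv=\{\mu\in E^n:r(\mu)=v\}$, $E^*v=\bigcup_nE^nv$; $Z_v(\beta)=\sum_{n\ge0}|E^nv|e^{-\beta n}$ and $\beta_v=\inf\{\beta\in\mathbb R:Z_v(\beta)<\infty\}\in\{-\infty\}\cup[0,\infty)$. The directed cover $T(E,v)$ is the rooted tree with vertex set $E^*v$, root $v$, and an edge from $x$ to $y$ iff $y=ex$ for some $e\in E^1$. $\partial T$ is the set of infinite rooted paths in a rooted tree $T$, with metric $d(x,y)=e^{-n}$ where $n$ is the length of the longest common initial segment of $x\neq y$, and $\dim\partial T$ its Hausdorff dimension. *)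

theory Defs
  imports "HOL-Analysis.Analysis" "Jordan_Normal_Form.Spectral_Radius"
begin

text \<open>A finite directed graph E: vertex set E^0 = {0..<N}, a finite edge set Ed,
  source map s and range map r. Paths are lists of edges [e1,...,en] with
  r(e_i) = s(e_{i+1}); the range of a nonempty path is r of its last edge, the
  empty list represents the length-0 path at the (fixed) vertex v.\<close>

definition graph_path :: "'e set \<Rightarrow> ('e \<Rightarrow> nat) \<Rightarrow> ('e \<Rightarrow> nat) \<Rightarrow> 'e list \<Rightarrow> bool" where
  "graph_path Ed s r xs \<longleftrightarrow> set xs \<subseteq> Ed \<and>
     (\<forall>i. Suc i < length xs \<longrightarrow> r (xs ! i) = s (xs ! Suc i))"

definition paths_to :: "'e set \<Rightarrow> ('e \<Rightarrow> nat) \<Rightarrow> ('e \<Rightarrow> nat) \<Rightarrow> nat \<Rightarrow> nat \<Rightarrow> 'e list set" where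
  "paths_to Ed s r n v = {xs. length xs = n \<and> graph_path Ed s r xs \<and> (xs \<noteq> [] \<longrightarrow> r (last xs) = v)}"

definition all_paths_to :: "'e set \<Rightarrow> ('e \<Rightarrow> nat) \<Rightarrow> ('e \<Rightarrow> nat) \<Rightarrow> nat \<Rightarrow> 'e list set" where
  "all_paths_to Ed s r v = (\<Union>n. paths_to Ed s r n v)"

definition adj_mat :: "nat \<Rightarrow> 'e set \<Rightarrow> ('e \<Rightarrow> nat) \<Rightarrow> ('e \<Rightarrow> nat) \<Rightarrow> complex mat" where
  "adj_mat N Ed s r = mat N N (\<lambda>(v, w). of_nat (card {e \<in> Ed. s e = v \<and> r e = w}))"

definition partition_fun :: "'e set \<Rightarrow> ('e \<Rightarrow> nat) \<Rightarrow> ('e \<Rightarrow> nat) \<Rightarrow> nat \<Rightarrow> real \<Rightarrow> ennreal" where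
  "partition_fun Ed s r v \<beta> = (\<Sum>n. ennreal (real (card (paths_to Ed s r n v)) * exp (- \<beta> * real n)))"

definition crit_beta :: "'e set \<Rightarrow> ('e \<Rightarrow> nat) \<Rightarrow> ('e \<Rightarrow> nat) \<Rightarrow> nat \<Rightarrow> ereal" where
  "crit_beta Ed s r v = Inf (ereal ` {\<beta>. partition_fun Ed s r v \<beta> < \<infinity>})"

text \<open>Boundary of the directed cover T(E,v): infinite rooted paths
  x_0 = v (the empty path), x_1, x_2, ... with x_{k+1} = e x_k for an edge e.\<close>
definition cover_boundary :: "'e set \<Rightarrow> ('e \<Rightarrow> nat) \<Rightarrow> ('e \<Rightarrow> nat) \<Rightarrow> nat \<Rightarrow> (nat \<Rightarrow> 'e list) set" where
  "cover_boundary Ed s r v = {x. x 0 = [] \<and>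
     (\<forall>k. x (Suc k) \<in> all_paths_to Ed s r v \<and> (\<exists>e\<in>Ed. x (Suc k) = e # x k))}"

definition ray_dist :: "(nat \<Rightarrow> 'a) \<Rightarrow> (nat \<Rightarrow> 'a) \<Rightarrow> real" where
  "ray_dist x y = (if x = y then 0 else exp (- real (GREATEST k. \<forall>i\<le>k. x i = y i)))"

definition set_diam :: "('a \<Rightarrow> 'a \<Rightarrow> real) \<Rightarrow> 'a set \<Rightarrow> real" where
  "set_diam d U = (if U = {} then 0 else (SUP p\<in>U \<times> U. d (fst p) (snd p)))"

definition diam_pow :: "('a \<Rightarrow> 'a \<Rightarrow> real) \<Rightarrow> real \<Rightarrow> 'a set \<Rightarrow> ennreal" where
  "diam_pow d t U = (if U = {} then 0 else if t = 0 then 1 else ennreal (set_diam d U powr t))"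

definition hausdorff_content :: "('a \<Rightarrow> 'a \<Rightarrow> real) \<Rightarrow> 'a set \<Rightarrow> real \<Rightarrow> real \<Rightarrow> ennreal" where
  "hausdorff_content d S t \<delta> = (INF U\<in>{U :: nat \<Rightarrow> 'a set. S \<subseteq> (\<Union>n. U n) \<and>
       (\<forall>n. U n \<subseteq> S \<and> bdd_above ((\<lambda>p. d (fst p) (snd p)) ` (U n \<times> U n)) \<and> set_diam d (U n) \<le> \<delta>)}.
       (\<Sum>n. diam_pow d t (U n)))"

definition hausdorff_measure :: "('a \<Rightarrow> 'a \<Rightarrow> real) \<Rightarrow> 'a set \<Rightarrow> real \<Rightarrow> ennreal" where
  "hausdorff_measure d S t = (SUP \<delta>\<in>{0<..}. hausdorff_content d S t \<delta>)"

definition hausdorff_dim :: "('a \<Rightarrow> 'a \<Rightarrow> real) \<Rightarrow> 'a set \<Rightarrow> ereal" where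
  "hausdorff_dim d S = Inf (ereal ` {t. t \<ge> 0 \<and> hausdorff_measure d S t = 0})"

end

theory Submission
  imports Defs "HOL-Probability.Probability"
begin

lemma graph_path_Nil[simp]: "graph_path Ed s r []"
  by (simp add: graph_path_def)

lemma graph_path_Cons:
  "graph_path Ed s r (e # xs) \<longleftrightarrow> e \<in> Ed \<and> graph_path Ed s r xs \<and> (xs \<noteq> [] \<longrightarrow> r e = s (hd xs))"
proof
  assume a: "graph_path Ed s r (e # xs)"
  have "\<forall>i. Suc i < length xs \<longrightarrow> r (xs ! i) = s (xs ! Suc i)"
  proof (intro allI impI)
    fix i assume "Suc i < length xs"
    with a have "r ((e#xs) ! Suc i) = s ((e#xs) ! Suc (Suc i))" unfolding graph_path_def by auto
    thus "r (xs ! i) = s (xs ! Suc i)" by simp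
  qed
  moreover have "xs \<noteq> [] \<longrightarrow> r e = s (hd xs)"
  proof
    assume "xs \<noteq> []"
    with a have "r ((e#xs) ! 0) = s ((e#xs) ! Suc 0)" unfolding graph_path_def by auto
    thus "r e = s (hd xs)" using \<open>xs \<noteq> []\<close> by (simp add: hd_conv_nth)
  qed
  ultimately show "e \<in> Ed \<and> graph_path Ed s r xs \<and> (xs \<noteq> [] \<longrightarrow> r e = s (hd xs))"
    using a unfolding graph_path_def by auto
next
  assume a: "e \<in> Ed \<and> graph_path Ed s r xs \<and> (xs \<noteq> [] \<longrightarrow> r e = s (hd xs))"
  show "graph_path Ed s r (e # xs)" unfolding graph_path_def
  proof (intro conjI allI impI)
    show "set (e # xs) \<subseteq> Ed" using a by (auto simp: graph_path_def)
    fix i assume i: "Suc i < length (e # xs)"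
    show "r ((e # xs) ! i) = s ((e # xs) ! Suc i)"
    proof (cases i)
      case 0 thus ?thesis using a i by (auto simp: hd_conv_nth)
    next
      case (Suc j) thus ?thesis using a i by (auto simp: graph_path_def)
    qed
  qed
qed

lemma graph_path_append:
  "graph_path Ed s r (xs @ ys) \<longleftrightarrow> graph_path Ed s r xs \<and> graph_path Ed s r ys \<and>
     (xs \<noteq> [] \<longrightarrow> ys \<noteq> [] \<longrightarrow> r (last xs) = s (hd ys))"
  by (induction xs) (auto simp: graph_path_Cons)

locale fgraph =
  fixes N :: nat and Ed :: "'e set" and s r :: "'e \<Rightarrow> nat"
  assumes finE: "finite Ed" and bnd: "\<forall>e\<in>Ed. s e < N \<and> r e < N"
begin

definition cnt :: "nat \<Rightarrow> nat \<Rightarrow> nat" where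
  "cnt u v = card {e \<in> Ed. s e = u \<and> r e = v}"

fun P :: "nat \<Rightarrow> nat \<Rightarrow> nat \<Rightarrow> nat" where
  "P 0 w v = (if w = v then 1 else 0)"
| "P (Suc n) w v = (\<Sum>u<N. P n w u * cnt u v)"

definition walks :: "nat \<Rightarrow> nat \<Rightarrow> nat \<Rightarrow> 'e list set" where
  "walks n w v = {xs. length xs = n \<and> graph_path Ed s r xs \<and>
      (if xs = [] then w = v else s (hd xs) = w \<and> r (last xs) = v)}"

lemma walks_0: "walks 0 w v = (if w = v then {[]} else {})"
  by (auto simp: walks_def)

lemma walks_Suc: assumes w: "w < N" shows "walks (Suc n) w v =
   (\<lambda>(xs, e). xs @ [e]) ` (\<Union>u\<in>{..<N}. walks n w u \<times> {e \<in> Ed. s e = u \<and> r e = v})"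
proof (rule Set.set_eqI, rule iffI)
  fix ys assume ys: "ys \<in> walks (Suc n) w v"
  then have "ys \<noteq> []" by (auto simp: walks_def)
  then obtain xs e where ye: "ys = xs @ [e]" by (metis rev_exhaust)
  have gp: "graph_path Ed s r xs" "e \<in> Ed" "xs \<noteq> [] \<longrightarrow> r (last xs) = s e"
    using ys ye by (auto simp: walks_def graph_path_append graph_path_Cons)
  define u where "u = s e"
  have u: "u < N" using bnd gp(2) by (auto simp: u_def)
  have "xs \<in> walks n w u" using ys ye gp by (auto simp: walks_def u_def)
  moreover have "e \<in> {e \<in> Ed. s e = u \<and> r e = v}" using ys ye gp by (auto simp: walks_def u_def)
  ultimately show "ys \<in> (\<lambda>(xs, e). xs @ [e]) ` (\<Union>u\<in>{..<N}. walks n w u \<times> {e \<in> Ed. s e = u \<and> r e = v})"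
    using u ye by force
next
  fix ys assume "ys \<in> (\<lambda>(xs, e). xs @ [e]) ` (\<Union>u\<in>{..<N}. walks n w u \<times> {e \<in> Ed. s e = u \<and> r e = v})"
  then obtain xs e u where "ys = xs @ [e]" "xs \<in> walks n w u" "e \<in> Ed" "s e = u" "r e = v" by auto
  then show "ys \<in> walks (Suc n) w v"
    by (auto simp: walks_def graph_path_append graph_path_Cons split: if_splits)
qed

lemma fin_edges: "finite {e \<in> Ed. s e = u \<and> r e = v}"
  using finE by auto

lemma walks_card: "w < N \<Longrightarrow> finite (walks n w v) \<and> card (walks n w v) = P n w v"
proof (induction n arbitrary: v)
  case 0 thus ?case by (simp add: walks_0)
next
  case (Suc n)
  have inj: "inj_on (\<lambda>(xs, e). xs @ [e]) X" for X :: "('e list \<times> 'e) set"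
    by (auto simp: inj_on_def)
  have fin: "\<And>u. finite (walks n w u \<times> {e \<in> Ed. s e = u \<and> r e = v})"
    using Suc fin_edges by auto
  have disj: "\<And>u u'. u \<noteq> u' \<Longrightarrow> (walks n w u \<times> {e \<in> Ed. s e = u \<and> r e = v}) \<inter>
      (walks n w u' \<times> {e \<in> Ed. s e = u' \<and> r e = v}) = {}" by auto
  have "card (walks (Suc n) w v) = card (\<Union>u\<in>{..<N}. walks n w u \<times> {e \<in> Ed. s e = u \<and> r e = v})"
    unfolding walks_Suc[OF Suc.prems] by (rule card_image[OF inj])
  also have "\<dots> = (\<Sum>u<N. card (walks n w u \<times> {e \<in> Ed. s e = u \<and> r e = v}))"
    by (rule card_UN_disjoint) (use fin disj in auto)
  also have "\<dots> = (\<Sum>u<N. P n w u * cnt u v)"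
    using Suc by (simp add: card_cartesian_product cnt_def)
  finally show ?case using fin walks_Suc[OF Suc.prems] by auto
qed

lemma cnt_zero: assumes "v \<ge> N" shows "cnt u v = 0"
proof -
  have "{e \<in> Ed. s e = u \<and> r e = v} = {}" using assms bnd by auto
  thus ?thesis unfolding cnt_def by (metis card.empty)
qed

lemma P_semigroup: "w < N \<Longrightarrow> v < N \<Longrightarrow> P (a + b) w v = (\<Sum>u<N. P a w u * P b u v)"
proof (induction b arbitrary: v)
  case 0
  have "(\<Sum>u<N. P a w u * P 0 u v) = (\<Sum>u\<in>{v}. P a w u * P 0 u v)"
    by (rule sum.mono_neutral_right) (use 0 in auto)
  thus ?case by simp
next
  case (Suc b)
  have "P (a + Suc b) w v = (\<Sum>x<N. P (a + b) w x * cnt x v)" by simp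
  also have "\<dots> = (\<Sum>x<N. (\<Sum>u<N. P a w u * P b u x) * cnt x v)"
    using Suc by simp
  also have "\<dots> = (\<Sum>u<N. P a w u * (\<Sum>x<N. P b u x * cnt x v))"
    apply (simp add: sum_distrib_left sum_distrib_right mult.assoc)
    by (rule sum.swap)
  finally show ?case by simp
qed

lemma P_first: "i < N \<Longrightarrow> j < N \<Longrightarrow> P (Suc n) i j = (\<Sum>u<N. cnt i u * P n u j)"
proof -
  assume a: "i < N" "j < N"
  have "P (1 + n) i j = (\<Sum>u<N. P 1 i u * P n u j)" by (rule P_semigroup[OF a])
  moreover have "P 1 i u = cnt i u" if "u < N" for u
  proof -
    have "P 1 i u = (\<Sum>x<N. P 0 i x * cnt x u)" by simp
    also have "\<dots> = (\<Sum>x\<in>{i}. P 0 i x * cnt x u)"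
      by (rule sum.mono_neutral_right) (use a in auto)
    finally show ?thesis by simp
  qed
  ultimately show ?thesis by simp
qed

lemma P_mult_le: assumes "w < N" "v < N" "u < N" shows "P a w u * P b u v \<le> P (a + b) w v"
proof -
  have "P a w u * P b u v \<le> (\<Sum>x<N. P a w x * P b x v)"
    by (rule member_le_sum) (use assms in auto)
  thus ?thesis using P_semigroup[OF assms(1,2)] by simp
qed

lemma P_zero_out: "v \<ge> N \<Longrightarrow> w < N \<Longrightarrow> P n w v = 0"
  by (cases n) (auto simp: cnt_zero)

lemma paths_to_card: assumes v: "v < N" shows "finite (paths_to Ed s r n v) \<and> card (paths_to Ed s r n v) = (\<Sum>w<N. P n w v)"
proof (cases n)
  case 0
  have "paths_to Ed s r 0 v = {[]}" by (auto simp: paths_to_def)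
  moreover have "(\<Sum>w<N. P 0 w v) = (\<Sum>w\<in>{v}. P 0 w v)"
    by (rule sum.mono_neutral_right) (use v in auto)
  ultimately show ?thesis using 0 by simp
next
  case (Suc m)
  have eq: "paths_to Ed s r n v = (\<Union>w\<in>{..<N}. walks n w v)"
  proof (rule Set.set_eqI, rule iffI)
    fix xs assume xs: "xs \<in> paths_to Ed s r n v"
    hence ne: "xs \<noteq> []" using Suc by (auto simp: paths_to_def)
    hence "hd xs \<in> Ed" using xs by (auto simp: paths_to_def graph_path_def)
    hence "s (hd xs) < N" using bnd by auto
    thus "xs \<in> (\<Union>w\<in>{..<N}. walks n w v)" using xs ne by (auto simp: paths_to_def walks_def)
  next
    fix xs assume "xs \<in> (\<Union>w\<in>{..<N}. walks n w v)"
    thus "xs \<in> paths_to Ed s r n v" using Suc by (auto simp: paths_to_def walks_def)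
  qed
  have fin: "\<And>w. w \<in> {..<N} \<Longrightarrow> finite (walks n w v)" using walks_card by auto
  have "card (\<Union>w\<in>{..<N}. walks n w v) = (\<Sum>w<N. card (walks n w v))"
    by (rule card_UN_disjoint) (use fin Suc in \<open>auto simp: walks_def\<close>)
  thus ?thesis using eq fin walks_card by auto
qed

definition A :: "complex mat" where "A = adj_mat N Ed s r"

lemma A_carrier: "A \<in> carrier_mat N N" by (simp add: A_def adj_mat_def)

lemma A_index: "i < N \<Longrightarrow> j < N \<Longrightarrow> A $$ (i,j) = of_nat (cnt i j)"
  by (simp add: A_def adj_mat_def cnt_def)

lemma A_pow_index: "i < N \<Longrightarrow> j < N \<Longrightarrow> (A ^\<^sub>m n) $$ (i,j) = of_nat (P n i j)"
proof (induction n arbitrary: j)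
  case 0 thus ?case using A_carrier by simp
next
  case (Suc n)
  have "(A ^\<^sub>m Suc n) $$ (i,j) = row (A ^\<^sub>m n) i \<bullet> col A j"
    using Suc A_carrier by simp
  also have "\<dots> = (\<Sum>k<N. (A ^\<^sub>m n) $$ (i,k) * A $$ (k,j))"
    using Suc A_carrier by (simp add: scalar_prod_def atLeast0LessThan)
  also have "\<dots> = (\<Sum>k<N. of_nat (P n i k * cnt k j))"
    using Suc by (simp add: A_index)
  finally show ?case by simp
qed

end


context fgraph begin

definition rho :: real where "rho = spectral_radius A"

lemma mat_vec_entry: assumes "M \<in> carrier_mat N N" "x \<in> carrier_vec N" "i < N"
  shows "(M *\<^sub>v x) $ i = (\<Sum>j<N. M $$ (i,j) * x $ j)"
  using assms by (simp add: scalar_prod_def atLeast0LessThan)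

lemma mat_mult_entry: assumes "M \<in> carrier_mat N N" "M' \<in> carrier_mat N N" "i < N" "j < N"
  shows "(M * M') $$ (i,j) = (\<Sum>k<N. M $$ (i,k) * M' $$ (k,j))"
  using assms by (simp add: scalar_prod_def atLeast0LessThan)

lemma upper_growth:
  assumes N: "N > 0" and c: "c > 0" "rho \<le> c"
  shows "\<exists>C1 C2. \<forall>k i j. i < N \<longrightarrow> j < N \<longrightarrow> real (P k i j) \<le> c ^ k * (C1 + C2 * real k ^ (N - 1))"
proof -
  define a :: complex where "a = of_real (1 / c)"
  define B where "B = a \<cdot>\<^sub>m A"
  have Bc: "B \<in> carrier_mat N N" using A_carrier by (simp add: B_def)
  have Bent: "B $$ (i,j) = a * A $$ (i,j)" if "i < N" "j < N" for i j
    using that A_carrier by (simp add: B_def)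
  have "norm l \<le> 1" if l: "l \<in> spectrum B" for l
  proof -
    from l obtain x where ev: "eigenvector B x l" by (auto simp: spectrum_def eigenvalue_def)
    hence x: "x \<in> carrier_vec N" "x \<noteq> 0\<^sub>v N" "B *\<^sub>v x = l \<cdot>\<^sub>v x"
      using Bc by (auto simp: eigenvector_def)
    have "A *\<^sub>v x = (of_real c * l) \<cdot>\<^sub>v x"
    proof (rule eq_vecI)
      fix i assume i: "i < dim_vec ((of_real c * l) \<cdot>\<^sub>v x)"
      hence i: "i < N" using x by simp
      have "l * x $ i = (B *\<^sub>v x) $ i" using x i by simp
      also have "\<dots> = (\<Sum>j<N. a * A $$ (i,j) * x $ j)"
        using mat_vec_entry[OF Bc x(1) i] Bent i by simp
      also have "\<dots> = a * (A *\<^sub>v x) $ i"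
        using mat_vec_entry[OF A_carrier x(1) i] by (simp add: sum_distrib_left mult.assoc)
      finally have "(A *\<^sub>v x) $ i = of_real c * l * x $ i"
        using c by (simp add: a_def field_simps)
      thus "(A *\<^sub>v x) $ i = ((of_real c * l) \<cdot>\<^sub>v x) $ i" using i x by simp
    qed (use x A_carrier in simp)
    hence "eigenvector A x (of_real c * l)" using x A_carrier by (simp add: eigenvector_def)
    hence "of_real c * l \<in> spectrum A" by (auto simp: spectrum_def eigenvalue_def)
    hence "norm (of_real c * l) \<le> rho" using spectral_radius_mem_max(2)[OF A_carrier N] by (simp add: rho_def)
    hence "c * norm l \<le> rho" using c by (simp add: norm_mult)
    hence "c * norm l \<le> c * 1" using c by linarith
    thus "norm l \<le> 1" using c by (simp add: mult_le_cancel_left_pos)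
  qed
  hence sr: "spectral_radius B \<le> 1"
    unfolding spectral_radius_def
    using card_finite_spectrum(1)[OF Bc] spectrum_non_empty[OF Bc N] by (auto simp: Max_le_iff)
  obtain C1 C2 where nb: "\<And>k. norm_bound (B ^\<^sub>m k) (C1 + C2 * of_nat k ^ (N - 1))"
    using spectral_radius_jnf_norm_bound_le_1_upper_triangular[OF Bc sr] by blast
  have Bpow: "(B ^\<^sub>m k) $$ (i,j) = a ^ k * (A ^\<^sub>m k) $$ (i,j)" if "i < N" "j < N" for k i j
    using that
  proof (induction k arbitrary: j)
    case 0 thus ?case using Bc A_carrier by simp
  next
    case (Suc k)
    have "(B ^\<^sub>m Suc k) $$ (i,j) = (\<Sum>l<N. (B ^\<^sub>m k) $$ (i,l) * B $$ (l,j))"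
      using mat_mult_entry[OF pow_carrier_mat[OF Bc] Bc Suc.prems] by simp
    also have "\<dots> = (\<Sum>l<N. a ^ Suc k * ((A ^\<^sub>m k) $$ (i,l) * A $$ (l,j)))"
      using Suc Bent by (intro sum.cong) (auto simp: algebra_simps)
    also have "\<dots> = a ^ Suc k * (A ^\<^sub>m Suc k) $$ (i,j)"
      using mat_mult_entry[OF pow_carrier_mat[OF A_carrier] A_carrier Suc.prems] by (simp add: sum_distrib_left)
    finally show ?case .
  qed
  show ?thesis
  proof (intro exI allI impI)
    fix k i j assume ij: "i < N" "j < N"
    have "norm ((B ^\<^sub>m k) $$ (i,j)) \<le> C1 + C2 * of_nat k ^ (N - 1)"
      using nb[of k] ij Bc unfolding norm_bound_def by auto
    also have "norm ((B ^\<^sub>m k) $$ (i,j)) = (1/c) ^ k * real (P k i j)"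
      using Bpow[OF ij] A_pow_index[OF ij] c by (simp add: a_def norm_mult norm_power norm_divide)
    finally have "(1/c) ^ k * real (P k i j) \<le> C1 + C2 * real k ^ (N - 1)" by simp
    hence "c ^ k * ((1/c) ^ k * real (P k i j)) \<le> c ^ k * (C1 + C2 * real k ^ (N - 1))"
      using c by (intro mult_left_mono) auto
    thus "real (P k i j) \<le> c ^ k * (C1 + C2 * real k ^ (N - 1))"
      using c by (simp add: power_one_over field_simps)
  qed
qed

lemma eigen_sub:
  assumes N: "N > 0"
  shows "\<exists>y :: nat \<Rightarrow> real. (\<forall>j. y j \<ge> 0) \<and> (\<exists>j<N. y j > 0) \<and>
     (\<forall>i<N. rho * y i \<le> (\<Sum>j<N. real (cnt i j) * y j))"
proof -
  obtain l where l: "l \<in> spectrum A" "norm l = rho"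
    using spectral_radius_mem_max(1)[OF A_carrier N] by (auto simp: rho_def)
  from l obtain x where ev: "eigenvector A x l" by (auto simp: spectrum_def eigenvalue_def)
  hence x: "x \<in> carrier_vec N" "x \<noteq> 0\<^sub>v N" "A *\<^sub>v x = l \<cdot>\<^sub>v x"
    using A_carrier by (auto simp: eigenvector_def)
  define y where "y j = norm (x $ j)" for j
  have "\<exists>j<N. x $ j \<noteq> 0"
  proof (rule ccontr)
    assume "\<not> ?thesis"
    hence "x = 0\<^sub>v N" using x(1) by (intro eq_vecI) auto
    thus False using x(2) by simp
  qed
  hence "\<exists>j<N. y j > 0" by (auto simp: y_def)
  moreover have "rho * y i \<le> (\<Sum>j<N. real (cnt i j) * y j)" if i: "i < N" for i
  proof -
    have "l * x $ i = (A *\<^sub>v x) $ i" using x i by simp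
    also have "\<dots> = (\<Sum>j<N. of_nat (cnt i j) * x $ j)"
      using mat_vec_entry[OF A_carrier x(1) i] A_index i by simp
    finally have "norm (l * x $ i) = norm (\<Sum>j<N. of_nat (cnt i j) * x $ j)" by simp
    also have "\<dots> \<le> (\<Sum>j<N. norm (of_nat (cnt i j) * x $ j))" by (rule norm_sum)
    also have "\<dots> = (\<Sum>j<N. real (cnt i j) * y j)" by (simp add: y_def norm_mult)
    finally show ?thesis using l by (simp add: y_def norm_mult)
  qed
  ultimately show ?thesis by (intro exI[of _ y]) (auto simp: y_def)
qed

end


context fgraph begin

lemma growth_lower:
  assumes N: "N > 0" and rho1: "rho \<ge> 1"
  shows "\<exists>i<N. \<exists>c>0. \<forall>n. \<exists>L\<ge>n. c * rho ^ L \<le> real (P L i i)"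
proof -
  obtain y :: "nat \<Rightarrow> real" where y0: "\<And>j. y j \<ge> 0" and ypos: "\<exists>j<N. y j > 0"
    and ysub: "\<And>i. i < N \<Longrightarrow> rho * y i \<le> (\<Sum>j<N. real (cnt i j) * y j)"
    using eigen_sub[OF N] by blast
  have iter: "rho ^ n * y i \<le> (\<Sum>j<N. real (P n i j) * y j)" if "i < N" for n i
    using that
  proof (induction n arbitrary: i)
    case 0
    have "(\<Sum>j<N. real (P 0 i j) * y j) = (\<Sum>j\<in>{i}. real (P 0 i j) * y j)"
      by (rule sum.mono_neutral_right) (use 0 in auto)
    thus ?case by simp
  next
    case (Suc n)
    have "(\<Sum>j<N. real (P (Suc n) i j) * y j) = (\<Sum>j<N. \<Sum>u<N. real (cnt i u) * (real (P n u j) * y j))"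
      using Suc.prems by (intro sum.cong) (auto simp: P_first sum_distrib_right mult.assoc simp del: P.simps(2))
    also have "\<dots> = (\<Sum>u<N. real (cnt i u) * (\<Sum>j<N. real (P n u j) * y j))"
      by (subst sum.swap) (simp add: sum_distrib_left)
    also have "\<dots> \<ge> (\<Sum>u<N. real (cnt i u) * (rho ^ n * y u))"
      using Suc.IH by (intro sum_mono mult_left_mono) auto
    also have "(\<Sum>u<N. real (cnt i u) * (rho ^ n * y u)) = rho ^ n * (\<Sum>u<N. real (cnt i u) * y u)"
      by (simp add: sum_distrib_left algebra_simps)
    also have "\<dots> \<ge> rho ^ n * (rho * y i)"
      using ysub[OF Suc.prems] rho1 by (intro mult_left_mono) auto
    finally show ?case by (simp add: algebra_simps)
  qed
  define V where "V = {i. i < N \<and> y i > 0}"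
  define Rs where "Rs i = {j \<in> V. \<exists>d. P d i j > 0}" for i
  have finV: "finite V" by (simp add: V_def)
  have Vne: "V \<noteq> {}" using ypos by (auto simp: V_def)
  define f where "f i = card (Rs i)" for i
  obtain i where iV: "i \<in> V" and imin: "\<And>i'. i' \<in> V \<Longrightarrow> f i \<le> f i'"
  proof -
    have "Min (f ` V) \<in> f ` V" using finV Vne by simp
    then obtain i where "i \<in> V" "f i = Min (f ` V)" by auto
    moreover have "\<And>i'. i' \<in> V \<Longrightarrow> Min (f ` V) \<le> f i'" using finV by simp
    ultimately show ?thesis using that by metis
  qed
  have iN: "i < N" using iV by (simp add: V_def)
  have backr: "\<exists>d. P d j i > 0" if j: "j \<in> Rs i" for j
  proof -
    have jN: "j < N" using j by (simp add: Rs_def V_def)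
    obtain d1 where d1: "P d1 i j > 0" using j by (auto simp: Rs_def)
    have sub: "Rs j \<subseteq> Rs i"
    proof
      fix k assume "k \<in> Rs j"
      then obtain d2 where kV: "k \<in> V" and d2: "P d2 j k > 0" by (auto simp: Rs_def)
      have "P d1 i j * P d2 j k \<le> P (d1 + d2) i k"
        using P_mult_le iN jN kV by (simp add: V_def)
      moreover have "P d1 i j * P d2 j k > 0" using d1 d2 by simp
      ultimately have "P (d1 + d2) i k > 0" by linarith
      thus "k \<in> Rs i" using kV by (auto simp: Rs_def)
    qed
    have "f i \<le> f j" using imin j by (simp add: Rs_def)
    have finRi: "finite (Rs i)" using finV by (simp add: Rs_def)
    have "card (Rs j) \<le> card (Rs i)" by (rule card_mono[OF finRi sub])
    hence "card (Rs j) = card (Rs i)" using \<open>f i \<le> f j\<close> by (simp add: f_def)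
    hence "Rs j = Rs i" by (rule card_subset_eq[OF finRi sub])
    moreover have "i \<in> Rs i" using iV by (auto simp: Rs_def intro!: exI[of _ 0])
    ultimately show ?thesis by (auto simp: Rs_def)
  qed
  define d where "d j = (SOME d. P d j i > 0)" for j
  have dpos: "P (d j) j i > 0" if "j \<in> Rs i" for j
    using backr[OF that] unfolding d_def by (rule someI_ex)
  have finR: "finite (Rs i)" using finV by (simp add: Rs_def)
  define D where "D = Max (insert 0 (d ` Rs i))"
  have dD: "d j \<le> D" if "j \<in> Rs i" for j using that finR by (simp add: D_def)
  define Ym where "Ym = Max (y ` {..<N})"
  have yYm: "y j \<le> Ym" if "j < N" for j using that by (simp add: Ym_def)
  have yi: "y i > 0" using iV by (simp add: V_def)
  have Ympos: "Ym > 0" using yYm[OF iN] yi by simp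
  define c where "c = y i / (real N * Ym * rho ^ D)"
  have cpos: "c > 0" using yi Ympos N rho1 by (simp add: c_def)
  have main: "\<forall>n. \<exists>L\<ge>n. c * rho ^ L \<le> real (P L i i)"
  proof
    fix n
    have rn: "rho ^ n * y i > 0" using rho1 yi by simp
    obtain j where jN: "j < N" and jbig: "rho ^ n * y i / real N \<le> real (P n i j) * y j"
    proof (rule ccontr)
      assume "\<not> thesis"
      hence lt: "\<And>j. j < N \<Longrightarrow> real (P n i j) * y j < rho ^ n * y i / real N" using that by force
      have "(\<Sum>j<N. real (P n i j) * y j) < (\<Sum>j<N. rho ^ n * y i / real N)"
        by (rule sum_strict_mono) (use lt N in auto)
      also have "\<dots> = rho ^ n * y i" using N by simp
      finally show False using iter[OF iN, of n] by simp
    qed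
    have "real (P n i j) * y j > 0" using jbig rn N by (smt (verit) divide_pos_pos of_nat_0_less_iff)
    hence Pp: "P n i j > 0" and yj: "y j > 0" using y0[of j]
      by (auto simp: zero_less_mult_iff)
    have jR: "j \<in> Rs i" using jN yj Pp by (auto simp: Rs_def V_def)
    have "rho ^ n * y i / real N \<le> real (P n i j) * Ym"
      using jbig yYm[OF jN] by (smt (verit) Pp mult_left_mono of_nat_0_le_iff)
    hence b0: "(rho ^ n * y i / real N) / Ym \<le> real (P n i j)"
      using pos_divide_le_eq[OF Ympos] by (metis mult.commute)
    have "rho ^ n * (y i / (real N * Ym)) = (rho ^ n * y i / real N) / Ym" by simp
    hence b1: "rho ^ n * (y i / (real N * Ym)) \<le> real (P n i j)" using b0 by simp
    have "P n i j * P (d j) j i \<le> P (n + d j) i i" using P_mult_le iN jN by simp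
    moreover have "P n i j \<le> P n i j * P (d j) j i" using dpos[OF jR] by simp
    ultimately have b2: "real (P n i j) \<le> real (P (n + d j) i i)" by linarith
    have "c * rho ^ (n + d j) = rho ^ n * (y i / (real N * Ym)) * (rho ^ d j / rho ^ D)"
      using rho1 by (simp add: c_def power_add field_simps)
    also have "\<dots> \<le> rho ^ n * (y i / (real N * Ym)) * 1"
    proof (rule mult_left_mono)
      show "rho ^ d j / rho ^ D \<le> 1" using rho1 dD[OF jR] by (simp add: power_increasing)
      show "0 \<le> rho ^ n * (y i / (real N * Ym))" using rho1 yi Ympos by simp
    qed
    finally have b3: "c * rho ^ (n + d j) \<le> rho ^ n * (y i / (real N * Ym))" by simp
    show "\<exists>L\<ge>n. c * rho ^ L \<le> real (P L i i)"
      using b1 b2 b3 by (intro exI[of _ "n + d j"]) auto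
  qed
  show ?thesis using main iN cpos by blast
qed

end


lemma poly_geo_summable:
  fixes x :: real assumes x: "0 \<le> x" "x < 1"
  shows "summable (\<lambda>n. real n ^ k * x ^ n)"
proof -
  define c where "c = (1 + x) / 2"
  have c: "c < 1" "x \<le> c" using x by (auto simp: c_def)
  have ev: "\<exists>M. \<forall>n\<ge>M. (1 + 1 / real n) ^ k * x \<le> c"
  proof (cases "x = 0")
    case True thus ?thesis using c by auto
  next
    case False
    hence xp: "x > 0" using x by simp
    have "(\<lambda>n. (1 + 1 / real n) ^ k * x) \<longlonglongrightarrow> (1 + 0) ^ k * x"
      by (intro tendsto_intros lim_1_over_n)
    hence "(\<lambda>n. (1 + 1 / real n) ^ k * x) \<longlonglongrightarrow> x" by simp
    moreover have "x < c" using xp x by (simp add: c_def)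
    ultimately have "eventually (\<lambda>n. (1 + 1 / real n) ^ k * x < c) sequentially"
      by (rule order_tendstoD)
    thus ?thesis by (auto simp: eventually_sequentially intro: less_imp_le)
  qed
  then obtain M where M: "\<And>n. n \<ge> M \<Longrightarrow> (1 + 1 / real n) ^ k * x \<le> c" by blast
  show ?thesis
  proof (rule summable_ratio_test[OF c(1), of "Suc M"])
    fix n assume n: "Suc M \<le> n"
    hence np: "real n > 0" by simp
    have "real (Suc n) ^ k = (1 + 1 / real n) ^ k * real n ^ k"
      using np by (simp add: power_mult_distrib[symmetric] field_simps)
    hence "real (Suc n) ^ k * x ^ Suc n = ((1 + 1 / real n) ^ k * x) * (real n ^ k * x ^ n)"
      by (simp add: algebra_simps)
    also have "\<dots> \<le> c * (real n ^ k * x ^ n)"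
      using M[of n] n x by (intro mult_right_mono) auto
    finally show "norm (real (Suc n) ^ k * x ^ Suc n) \<le> c * norm (real n ^ k * x ^ n)"
      using x by simp
  qed
qed

context fgraph begin

lemma cycle_rho:
  assumes cyc: "\<exists>\<mu>. \<mu> \<noteq> [] \<and> graph_path Ed s r \<mu> \<and> s (hd \<mu>) = r (last \<mu>)"
  shows "N > 0" "rho \<ge> 1"
proof -
  obtain \<mu> where mu: "\<mu> \<noteq> []" "graph_path Ed s r \<mu>" "s (hd \<mu>) = r (last \<mu>)" using cyc by blast
  define u where "u = s (hd \<mu>)"
  have "hd \<mu> \<in> Ed" using mu by (auto simp: graph_path_def)
  hence uN: "u < N" using bnd by (auto simp: u_def)
  thus "N > 0" by simp
  hence N: "N > 0" .
  have mem: "\<mu> \<in> walks (length \<mu>) u u" using mu by (auto simp: walks_def u_def)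
  have fw: "finite (walks (length \<mu>) u u)" using walks_card[OF uN] by blast
  have "card (walks (length \<mu>) u u) > 0" using fw mem card_gt_0_iff by blast
  hence P1: "P (length \<mu>) u u \<ge> 1" using walks_card[OF uN, of "length \<mu>" u] by simp
  have Pk: "P (k * length \<mu>) u u \<ge> 1" for k
  proof (induction k)
    case 0 thus ?case by simp
  next
    case (Suc k)
    have "P (k * length \<mu>) u u * P (length \<mu>) u u \<le> P (k * length \<mu> + length \<mu>) u u"
      using P_mult_le uN by simp
    moreover have "1 \<le> P (k * length \<mu>) u u * P (length \<mu>) u u"
      using Suc.IH P1 by (simp add: one_le_mult_iff)
    ultimately have "1 \<le> P (k * length \<mu> + length \<mu>) u u" by (rule order_trans[rotated])
    thus ?case by (simp add: add.commute)
  qed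
  have rho0: "rho \<ge> 0"
    using spectral_radius_mem_max(1)[OF A_carrier N] by (auto simp: rho_def)
  show "rho \<ge> 1"
  proof (rule ccontr)
    assume "\<not> rho \<ge> 1"
    define c where "c = (1 + rho) / 2"
    have c: "c > 0" "rho \<le> c" "c < 1" using rho0 \<open>\<not> rho \<ge> 1\<close> by (auto simp: c_def)
    obtain C1 C2 where CC: "\<And>k i j. i < N \<Longrightarrow> j < N \<Longrightarrow> real (P k i j) \<le> c ^ k * (C1 + C2 * real k ^ (N - 1))"
      using upper_growth[OF N c(1,2)] by blast
    have s1: "summable (\<lambda>n. C1 * c ^ n + C2 * (real n ^ (N - 1) * c ^ n))"
      using c by (intro summable_add summable_mult summable_geometric poly_geo_summable) auto
    hence "(\<lambda>n. C1 * c ^ n + C2 * (real n ^ (N - 1) * c ^ n)) \<longlonglongrightarrow> 0"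
      by (rule summable_LIMSEQ_zero)
    hence "eventually (\<lambda>n. C1 * c ^ n + C2 * (real n ^ (N - 1) * c ^ n) < 1) sequentially"
      by (rule order_tendstoD) simp
    then obtain M where M: "\<And>n. n \<ge> M \<Longrightarrow> C1 * c ^ n + C2 * (real n ^ (N - 1) * c ^ n) < 1"
      by (auto simp: eventually_sequentially)
    have "M \<le> M * length \<mu>" using mu by (cases \<mu>) auto
    hence "C1 * c ^ (M * length \<mu>) + C2 * (real (M * length \<mu>) ^ (N - 1) * c ^ (M * length \<mu>)) < 1"
      by (rule M)
    moreover have "1 \<le> real (P (M * length \<mu>) u u)" using Pk[of M] by simp
    ultimately show False using CC[OF uN uN, of "M * length \<mu>"] by (simp add: algebra_simps)
  qed
qed

lemma summable_paths:
  assumes N: "N > 0" and rp: "rho > 0" and v: "v < N" and t: "ln rho < t"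
  shows "summable (\<lambda>n. real (card (paths_to Ed s r n v)) * exp (- t * real n))"
proof -
  have "rho < exp t" using t rp by (metis exp_less_mono exp_ln)
  define c where "c = (rho + exp t) / 2"
  have c: "c > 0" "rho \<le> c" "c < exp t" using rp \<open>rho < exp t\<close> by (auto simp: c_def)
  obtain C1 C2 where CC: "\<And>k i j. i < N \<Longrightarrow> j < N \<Longrightarrow> real (P k i j) \<le> c ^ k * (C1 + C2 * real k ^ (N - 1))"
    using upper_growth[OF N c(1,2)] by blast
  define x where "x = c * exp (- t)"
  have x: "0 \<le> x" "x < 1" using c by (auto simp: x_def exp_minus field_simps)
  have s1: "summable (\<lambda>n. real N * (C1 * x ^ n + C2 * (real n ^ (N - 1) * x ^ n)))"
    using x by (intro summable_mult summable_add summable_geometric poly_geo_summable) auto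
  show ?thesis
  proof (rule summable_comparison_test'[OF s1])
    fix n
    have "real (card (paths_to Ed s r n v)) = (\<Sum>w<N. real (P n w v))"
      using paths_to_card[OF v] by simp
    also have "\<dots> \<le> (\<Sum>w<N. c ^ n * (C1 + C2 * real n ^ (N - 1)))"
      using CC v by (intro sum_mono) auto
    also have "\<dots> = real N * (c ^ n * (C1 + C2 * real n ^ (N - 1)))" by simp
    finally have b: "real (card (paths_to Ed s r n v)) \<le> real N * (c ^ n * (C1 + C2 * real n ^ (N - 1)))" .
    have e: "exp (- t * real n) = exp (- t) ^ n" by (metis exp_of_nat_mult mult.commute)
    have "real (card (paths_to Ed s r n v)) * exp (- t * real n) \<le>
        real N * (c ^ n * (C1 + C2 * real n ^ (N - 1))) * exp (- t) ^ n"
      using b e by (simp add: mult_right_mono)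
    also have "\<dots> = real N * (C1 * x ^ n + C2 * (real n ^ (N - 1) * x ^ n))"
      by (simp add: x_def power_mult_distrib algebra_simps)
    finally show "norm (real (card (paths_to Ed s r n v)) * exp (- t * real n)) \<le>
        real N * (C1 * x ^ n + C2 * (real n ^ (N - 1) * x ^ n))" by simp
  qed
qed

lemma ereal_Inf_le_real:
  assumes "\<And>b. b > a \<Longrightarrow> b \<in> S"
  shows "Inf (ereal ` S) \<le> ereal a"
proof (rule Inf_le_iff[THEN iffD2], intro allI impI)
  fix y assume y: "ereal a < y"
  then obtain z where z: "ereal a < z" "z < y" using dense by blast
  then obtain b where b: "z = ereal b" by (cases z) auto
  have "b \<in> S" using z b assms by simp
  thus "\<exists>x\<in>ereal ` S. x < y" using z b by auto
qed

lemma crit_le: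
  assumes N: "N > 0" and rp: "rho > 0" and v: "v < N"
  shows "crit_beta Ed s r v \<le> ereal (ln rho)"
  unfolding crit_beta_def
proof (rule ereal_Inf_le_real)
  fix b assume b: "ln rho < b"
  have sm: "summable (\<lambda>n. real (card (paths_to Ed s r n v)) * exp (- b * real n))"
    by (rule summable_paths[OF N rp v b])
  have "partition_fun Ed s r v b < \<infinity>"
    unfolding partition_fun_def
    apply (insert sm)
    apply (drule ennreal_suminf_neq_top)
     apply simp
    apply (simp add: less_top[symmetric])
    done
  thus "b \<in> {\<beta>. partition_fun Ed s r v \<beta> < \<infinity>}" by simp
qed

lemma crit_ge:
  assumes i: "i < N" and c: "c > 0" and rho1: "rho \<ge> 1"
    and gr: "\<And>n. \<exists>L\<ge>n. c * rho ^ L \<le> real (P L i i)"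
  shows "ereal (ln rho) \<le> crit_beta Ed s r i"
  unfolding crit_beta_def
proof (rule Inf_greatest)
  fix x assume "x \<in> ereal ` {\<beta>. partition_fun Ed s r i \<beta> < \<infinity>}"
  then obtain b where xb: "x = ereal b" and fin: "partition_fun Ed s r i b < \<infinity>" by auto
  have "ln rho \<le> b"
  proof (rule ccontr)
    assume "\<not> ln rho \<le> b"
    hence bl: "b < ln rho" by simp
    define f where "f n = real (card (paths_to Ed s r n i)) * exp (- b * real n)" for n
    have "summable f"
      using fin unfolding partition_fun_def f_def
      by (intro summable_suminf_not_top) auto
    hence "f \<longlonglongrightarrow> 0" by (rule summable_LIMSEQ_zero)
    hence "eventually (\<lambda>n. f n < c) sequentially" using c by (intro order_tendstoD) auto
    then obtain M where M: "\<And>n. n \<ge> M \<Longrightarrow> f n < c" by (auto simp: eventually_sequentially)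
    obtain L where L: "L \<ge> M" "c * rho ^ L \<le> real (P L i i)" using gr by blast
    have "real (P L i i) \<le> (\<Sum>w<N. real (P L w i))"
      using i by (intro member_le_sum) auto
    hence Pc: "real (P L i i) \<le> real (card (paths_to Ed s r L i))"
      using paths_to_card[OF i] by simp
    have "1 \<le> rho * exp (- b)"
    proof -
      have "exp b < exp (ln rho)" using bl by simp
      hence "exp b \<le> rho" using rho1 by simp
      thus ?thesis by (simp add: exp_minus field_simps)
    qed
    hence "1 \<le> (rho * exp (- b)) ^ L" by (rule one_le_power)
    hence "c \<le> c * (rho * exp (- b)) ^ L" using c by simp
    also have "\<dots> = c * rho ^ L * exp (- b * real L)"
    proof -
      have "exp (- b * real L) = exp (- b) ^ L" by (metis exp_of_nat_mult mult.commute)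
      thus ?thesis by (simp add: power_mult_distrib)
    qed
    also have "\<dots> \<le> f L" unfolding f_def using L(2) Pc by (intro mult_right_mono) auto
    finally show False using M[OF L(1)] by simp
  qed
  thus "ereal (ln rho) \<le> x" using xb by simp
qed

end


lemma cb_len: assumes "x \<in> cover_boundary Ed s r v" shows "length (x k) = k"
proof (induction k)
  case 0 from assms show ?case by (simp add: cover_boundary_def)
next
  case (Suc k)
  from assms obtain e where "x (Suc k) = e # x k" by (auto simp: cover_boundary_def)
  with Suc show ?case by simp
qed

lemma cb_drop: assumes "x \<in> cover_boundary Ed s r v" "k \<le> n" shows "x k = drop (n - k) (x n)"
  using assms(2)
proof (induction n)
  case 0 thus ?case using assms(1) by (simp add: cover_boundary_def)
next
  case (Suc n)
  show ?case
  proof (cases "k = Suc n")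
    case True thus ?thesis by simp
  next
    case False
    hence kn: "k \<le> n" using Suc.prems by simp
    obtain e where "x (Suc n) = e # x n" using assms(1) by (auto simp: cover_boundary_def)
    moreover have "Suc n - k = Suc (n - k)" using kn by simp
    ultimately show ?thesis using Suc.IH[OF kn] by simp
  qed
qed

lemma cb_paths: assumes "x \<in> cover_boundary Ed s r v" shows "x n \<in> paths_to Ed s r n v"
proof (cases n)
  case 0 thus ?thesis using assms by (simp add: cover_boundary_def paths_to_def)
next
  case (Suc m)
  have "x (Suc m) \<in> all_paths_to Ed s r v" using assms by (simp add: cover_boundary_def)
  then obtain k where "x (Suc m) \<in> paths_to Ed s r k v" by (auto simp: all_paths_to_def)
  moreover have "length (x (Suc m)) = Suc m" using cb_len[OF assms] .
  ultimately show ?thesis using Suc by (auto simp: paths_to_def)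
qed

lemma ray_dist_nonneg: "ray_dist x y \<ge> 0" by (simp add: ray_dist_def)

lemma ray_dist_le1: "ray_dist x y \<le> 1" by (simp add: ray_dist_def)

lemma ray_dist_le: assumes "\<forall>j\<le>n. x j = y j" shows "ray_dist x y \<le> exp (- real n)"
proof (cases "x = y")
  case True thus ?thesis by (simp add: ray_dist_def)
next
  case False
  then obtain j where j: "x j \<noteq> y j" by auto
  have "n \<le> (GREATEST k. \<forall>i\<le>k. x i = y i)"
  proof (rule Greatest_le_nat[of _ n j])
    show "\<forall>i\<le>n. x i = y i" using assms .
    fix k assume "\<forall>i\<le>k. x i = y i"
    thus "k \<le> j" using j by (metis not_le order_less_imp_le)
  qed
  thus ?thesis using False by (simp add: ray_dist_def)
qed

lemma ray_dist_agree:
  assumes "ray_dist x y \<le> D" "D > 0" and x0: "x 0 = y 0"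
  shows "\<forall>j\<le>nat \<lceil>- ln D\<rceil>. x j = y j"
proof (cases "x = y")
  case True thus ?thesis by simp
next
  case False
  then obtain j where j: "x j \<noteq> y j" by auto
  define G where "G = (GREATEST k. \<forall>i\<le>k. x i = y i)"
  have bnd: "\<And>k. \<forall>i\<le>k. x i = y i \<Longrightarrow> k \<le> j" using j by (metis not_le order_less_imp_le)
  have QG: "\<forall>i\<le>G. x i = y i" unfolding G_def
    by (rule GreatestI_nat[of _ 0 j]) (use x0 bnd in auto)
  have "exp (- real G) \<le> D" using assms(1) False by (simp add: ray_dist_def G_def)
  hence "- real G \<le> ln D" using assms(2) by (metis exp_le_cancel_iff exp_ln)
  hence "- ln D \<le> real G" by simp
  hence "\<lceil>- ln D\<rceil> \<le> int G" by (simp add: ceiling_le_iff)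
  hence m: "nat \<lceil>- ln D\<rceil> \<le> G" by (simp add: nat_le_iff)
  show ?thesis
  proof (intro allI impI)
    fix k assume "k \<le> nat \<lceil>- ln D\<rceil>"
    hence "k \<le> G" using m by linarith
    thus "x k = y k" using QG by blast
  qed
qed

lemma set_diam_le:
  assumes "U \<noteq> {}" "\<And>x y. x \<in> U \<Longrightarrow> y \<in> U \<Longrightarrow> d x y \<le> B"
  shows "set_diam d U \<le> B"
  unfolding set_diam_def using assms by (auto intro!: cSUP_least)

lemma set_diam_ge:
  assumes "bdd_above ((\<lambda>p. d (fst p) (snd p)) ` (U \<times> U))" "x \<in> U" "y \<in> U"
  shows "d x y \<le> set_diam d U"
proof -
  have "d (fst (x,y)) (snd (x,y)) \<le> (SUP p\<in>U \<times> U. d (fst p) (snd p))"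
    by (rule cSUP_upper) (use assms in auto)
  thus ?thesis using assms by (auto simp: set_diam_def)
qed

context fgraph begin

lemma content_upper:
  assumes v: "v < N" and t: "t > 0" and n: "exp (- real n) \<le> \<delta>"
  shows "hausdorff_content ray_dist (cover_boundary Ed s r v) t \<delta>
           \<le> ennreal (real (card (paths_to Ed s r n v)) * exp (- t * real n))"
proof -
  define S where "S = cover_boundary Ed s r v"
  have finP: "finite (paths_to Ed s r n v)" using paths_to_card[OF v] by blast
  obtain Ls where Ls: "set Ls = paths_to Ed s r n v" "distinct Ls"
    using finite_distinct_list[OF finP] by blast
  define U where "U j = (if j < length Ls then {x \<in> S. x n = Ls ! j} else {})" for j
  have diamU: "set_diam ray_dist (U j) \<le> exp (- real n)" if "U j \<noteq> {}" for j
  proof (rule set_diam_le[OF that])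
    fix x y assume "x \<in> U j" "y \<in> U j"
    hence xy: "x \<in> S" "y \<in> S" "x n = y n" by (auto simp: U_def split: if_splits)
    have "\<forall>k\<le>n. x k = y k" using cb_drop[of x Ed s r v] cb_drop[of y Ed s r v] xy by (simp add: S_def)
    thus "ray_dist x y \<le> exp (- real n)" by (rule ray_dist_le)
  qed
  have bddU: "bdd_above ((\<lambda>p. ray_dist (fst p) (snd p)) ` (U j \<times> U j))" for j
    by (rule bdd_aboveI[of _ 1]) (auto simp: ray_dist_le1)
  have cover: "S \<subseteq> (\<Union>j. U j)"
  proof
    fix x assume x: "x \<in> S"
    hence "x n \<in> set Ls" using cb_paths[of x] Ls by (simp add: S_def)
    then obtain j where "j < length Ls" "Ls ! j = x n" by (metis in_set_conv_nth)
    thus "x \<in> (\<Union>j. U j)" using x by (auto simp: U_def)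
  qed
  have Uin: "U \<in> {U. S \<subseteq> (\<Union>n. U n) \<and> (\<forall>j. U j \<subseteq> S \<and> bdd_above ((\<lambda>p. ray_dist (fst p) (snd p)) ` (U j \<times> U j)) \<and> set_diam ray_dist (U j) \<le> \<delta>)}"
  proof (intro CollectI conjI allI cover bddU)
    fix j show "U j \<subseteq> S" by (auto simp: U_def)
    show "set_diam ray_dist (U j) \<le> \<delta>"
    proof (cases "U j = {}")
      case True thus ?thesis using n by (simp add: set_diam_def) (metis exp_ge_zero order_trans)
    next
      case False thus ?thesis using diamU n by (meson order_trans)
    qed
  qed
  have "hausdorff_content ray_dist S t \<delta> \<le> (\<Sum>j. diam_pow ray_dist t (U j))"
    unfolding hausdorff_content_def by (rule INF_lower[OF Uin])
  also have "(\<Sum>j. diam_pow ray_dist t (U j)) = (\<Sum>j<length Ls. diam_pow ray_dist t (U j))"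
    by (rule suminf_finite) (auto simp: U_def diam_pow_def)
  also have "\<dots> \<le> (\<Sum>j<length Ls. ennreal (exp (- t * real n)))"
  proof (rule sum_mono)
    fix j assume "j \<in> {..<length Ls}"
    show "diam_pow ray_dist t (U j) \<le> ennreal (exp (- t * real n))"
    proof (cases "U j = {}")
      case True thus ?thesis by (simp add: diam_pow_def)
    next
      case False
      then obtain x where x: "x \<in> U j" by auto
      have d0: "0 \<le> set_diam ray_dist (U j)"
        using set_diam_ge[OF bddU x x] ray_dist_nonneg[of x x] by linarith
      have "set_diam ray_dist (U j) powr t \<le> exp (- real n) powr t"
        using diamU[OF False] d0 t by (intro powr_mono2) auto
      also have "exp (- real n) powr t = exp (- t * real n)" by (simp add: powr_def)
      finally show ?thesis using False t by (simp add: diam_pow_def ennreal_leI)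
    qed
  qed
  also have "\<dots> = ennreal (real (card (paths_to Ed s r n v)) * exp (- t * real n))"
    using Ls distinct_card[OF Ls(2)] by (simp add: ennreal_mult' ennreal_of_nat_eq_real_of_nat)
  finally show ?thesis by (simp add: S_def)
qed

lemma dim_upper:
  assumes N: "N > 0" and rho1: "rho \<ge> 1" and v: "v < N"
  shows "hausdorff_dim ray_dist (cover_boundary Ed s r v) \<le> ereal (ln rho)"
  unfolding hausdorff_dim_def
proof (rule ereal_Inf_le_real)
  fix t assume t: "ln rho < t"
  have rp: "rho > 0" using rho1 by simp
  have t0: "t > 0" using t ln_ge_zero[OF rho1] by linarith
  define f where "f n = real (card (paths_to Ed s r n v)) * exp (- t * real n)" for n
  have "summable f" unfolding f_def by (rule summable_paths[OF N rp v t])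
  hence f0: "f \<longlonglongrightarrow> 0" by (rule summable_LIMSEQ_zero)
  have e0: "(\<lambda>n. exp (- real n)) \<longlonglongrightarrow> 0"
  proof -
    have "(\<lambda>n. exp (- 1::real) ^ n) \<longlonglongrightarrow> 0" by (rule LIMSEQ_power_zero) (use exp_less_mono[of "-1" 0] in simp)
    moreover have "\<And>n. exp (- 1::real) ^ n = exp (- real n)" by (simp add: exp_of_nat_mult[symmetric])
    ultimately show ?thesis by simp
  qed
  have H0: "hausdorff_content ray_dist (cover_boundary Ed s r v) t \<delta> = 0" if d: "\<delta> > 0" for \<delta>
  proof -
    have "hausdorff_content ray_dist (cover_boundary Ed s r v) t \<delta> \<le> 0"
    proof (rule ennreal_le_epsilon)
      fix e :: real assume e: "e > 0"
      have "eventually (\<lambda>n. f n < e) sequentially" using f0 e by (intro order_tendstoD) auto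
      moreover have "eventually (\<lambda>n. exp (- real n) < \<delta>) sequentially" using e0 d by (intro order_tendstoD) auto
      ultimately have "eventually (\<lambda>n. f n < e \<and> exp (- real n) < \<delta>) sequentially" by (rule eventually_conj)
      then obtain M where "\<forall>n\<ge>M. f n < e \<and> exp (- real n) < \<delta>" by (auto simp: eventually_sequentially)
      hence n: "f M < e" "exp (- real M) < \<delta>" by auto
      have "hausdorff_content ray_dist (cover_boundary Ed s r v) t \<delta> \<le> ennreal (f M)"
        unfolding f_def by (rule content_upper[OF v t0]) (use n in simp)
      also have "\<dots> \<le> ennreal e" using n by (simp add: ennreal_leI)
      finally show "hausdorff_content ray_dist (cover_boundary Ed s r v) t \<delta> \<le> 0 + ennreal e" by simp
    qed
    thus ?thesis by simp
  qed
  have "hausdorff_measure ray_dist (cover_boundary Ed s r v) t = 0"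
    unfolding hausdorff_measure_def using H0 by simp
  thus "t \<in> {t. 0 \<le> t \<and> hausdorff_measure ray_dist (cover_boundary Ed s r v) t = 0}" using t0 by simp
qed

end


primrec pre :: "(nat \<Rightarrow> 'a list) \<Rightarrow> nat \<Rightarrow> 'a list" where
  "pre w 0 = []"
| "pre w (Suc q) = w q @ pre w q"

definition ray :: "nat \<Rightarrow> (nat \<Rightarrow> 'a list) \<Rightarrow> nat \<Rightarrow> 'a list" where
  "ray L w k = drop (L - k mod L) (w (k div L)) @ pre w (k div L)"

lemma pre_len: "(\<And>k. length (w k) = L) \<Longrightarrow> length (pre w q) = q * L"
  by (induction q) auto

lemma pre_inj:
  assumes "\<And>k. length (w k) = L" "\<And>k. length (w' k) = L" "pre w q = pre w' q"
  shows "\<forall>k<q. w k = w' k"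
  using assms(3)
proof (induction q)
  case 0 thus ?case by simp
next
  case (Suc q)
  have "w q @ pre w q = w' q @ pre w' q" using Suc.prems by simp
  moreover have "length (w q) = length (w' q)" using assms by simp
  ultimately have "w q = w' q" "pre w q = pre w' q" by auto
  thus ?case using Suc.IH by (auto simp: less_Suc_eq)
qed

lemma ray_block: "L > 0 \<Longrightarrow> length (w q) = L \<Longrightarrow> ray L w (q * L) = pre w q"
  by (simp add: ray_def)

lemma ray_Suc_eq:
  assumes L: "L > 0" and len: "\<And>k. length (w k) = L"
  shows "ray L w (Suc k) = drop (L - Suc (k mod L)) (w (k div L)) @ pre w (k div L)"
proof (cases "Suc (k mod L) = L")
  case True
  hence "Suc k mod L = 0" by (simp add: mod_Suc)
  moreover hence "Suc k div L = Suc (k div L)" by (simp add: div_Suc)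
  ultimately show ?thesis using True len by (simp add: ray_def)
next
  case False
  hence "Suc k mod L = Suc (k mod L)" by (simp add: mod_Suc)
  moreover hence "Suc k div L = k div L" by (simp add: div_Suc)
  ultimately show ?thesis by (simp add: ray_def)
qed

context fgraph begin

lemma walk_facts:
  assumes "zs \<in> walks L i i" "L > 0"
  shows "length zs = L" "zs \<noteq> []" "graph_path Ed s r zs" "s (hd zs) = i" "r (last zs) = i"
  using assms by (auto simp: walks_def split: if_splits)

lemma pre_hd:
  assumes w: "\<And>k. w k \<in> walks L i i" and L: "L > 0" and ne: "pre w q \<noteq> []"
  shows "s (hd (pre w q)) = i"
proof (cases q)
  case 0 thus ?thesis using ne by simp
next
  case (Suc q')
  have "w q' \<noteq> []" "s (hd (w q')) = i" using walk_facts[OF w L] by auto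
  thus ?thesis using Suc by simp
qed

lemma ray_step:
  assumes w: "\<And>k. w k \<in> walks L i i" and L: "L > 0"
  shows "\<exists>e\<in>Ed. ray L w (Suc k) = e # ray L w k \<and> (ray L w k = [] \<longrightarrow> r e = i) \<and>
           (ray L w k \<noteq> [] \<longrightarrow> r e = s (hd (ray L w k)))"
proof -
  have len: "\<And>k. length (w k) = L" using walk_facts[OF w L] by auto
  define q where "q = k div L"
  define m where "m = k mod L"
  define zs where "zs = w q"
  define p where "p = L - Suc m"
  have mL: "m < L" using L by (simp add: m_def)
  have pL: "p < L" and Lm: "L - m = Suc p" using mL by (auto simp: p_def)
  have zs: "length zs = L" "graph_path Ed s r zs" "s (hd zs) = i" "r (last zs) = i" "zs \<noteq> []"
    using walk_facts[OF w L] by (auto simp: zs_def)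
  have rk: "ray L w k = drop (Suc p) zs @ pre w q"
    by (simp add: ray_def q_def zs_def Lm[unfolded m_def, symmetric] m_def)
  have rSk: "ray L w (Suc k) = drop p zs @ pre w q"
    using ray_Suc_eq[where w=w, OF L len] by (simp add: q_def zs_def p_def m_def)
  have dp: "drop p zs = zs ! p # drop (Suc p) zs"
    using pL zs(1) by (simp add: Cons_nth_drop_Suc)
  have eE: "zs ! p \<in> Ed" using zs(2) pL zs(1) by (auto simp: graph_path_def)
  show ?thesis
  proof (intro bexI[OF _ eE] conjI impI)
    show "ray L w (Suc k) = zs ! p # ray L w k" using rSk rk dp by simp
    show "r (zs ! p) = s (hd (ray L w k))" if ne: "ray L w k \<noteq> []"
    proof (cases "Suc p < L")
      case True
      hence "drop (Suc p) zs \<noteq> []" "hd (drop (Suc p) zs) = zs ! Suc p"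
        using zs(1) by (auto simp: hd_drop_conv_nth)
      moreover have "r (zs ! p) = s (zs ! Suc p)" using zs(1,2) True by (auto simp: graph_path_def)
      ultimately show ?thesis using rk by simp
    next
      case False
      hence sp: "Suc p = L" using pL by simp
      hence "drop (Suc p) zs = []" using zs(1) by simp
      hence "ray L w k = pre w q" using rk by simp
      moreover have "r (zs ! p) = i"
      proof -
        have "p = length zs - 1" using zs(1) sp by simp
        thus ?thesis using zs(4,5) by (simp add: last_conv_nth)
      qed
      ultimately show ?thesis using pre_hd[where w=w, OF w L] ne by simp
    qed
    show "r (zs ! p) = i" if e: "ray L w k = []"
    proof (cases "Suc p < L")
      case True
      hence "drop (Suc p) zs \<noteq> []" using zs(1) by simp
      thus ?thesis using e rk by simp
    next
      case False
      hence sp: "Suc p = L" using pL by simp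
      hence "p = length zs - 1" using zs(1) by simp
      thus ?thesis using zs(4,5) by (simp add: last_conv_nth)
    qed
  qed
qed

lemma ray_paths:
  assumes w: "\<And>k. w k \<in> walks L i i" and L: "L > 0"
  shows "ray L w k \<in> paths_to Ed s r k i"
proof (induction k)
  case 0
  have "length (w 0) = L" using walk_facts[OF w L] by auto
  thus ?case by (simp add: ray_def paths_to_def)
next
  case (Suc k)
  have ex: "\<exists>e\<in>Ed. ray L w (Suc k) = e # ray L w k \<and> (ray L w k = [] \<longrightarrow> r e = i) \<and>
           (ray L w k \<noteq> [] \<longrightarrow> r e = s (hd (ray L w k)))" by (rule ray_step[where w=w, OF w L])
  then obtain e where e1: "e \<in> Ed" and eQ: "ray L w (Suc k) = e # ray L w k \<and> (ray L w k = [] \<longrightarrow> r e = i) \<and>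
           (ray L w k \<noteq> [] \<longrightarrow> r e = s (hd (ray L w k)))" ..
  note e = e1 eQ[THEN conjunct1] eQ[THEN conjunct2, THEN conjunct1] eQ[THEN conjunct2, THEN conjunct2]
  let ?x = "ray L w k"
  have IH: "length ?x = k" "graph_path Ed s r ?x" "?x \<noteq> [] \<longrightarrow> r (last ?x) = i"
    using Suc by (auto simp: paths_to_def)
  have gp: "graph_path Ed s r (e # ?x)" using e IH by (simp add: graph_path_Cons)
  have lst: "r (last (e # ?x)) = i" using e IH by (cases "?x = []") auto
  show ?case using e(2) IH(1) gp lst by (simp add: paths_to_def)
qed

lemma ray_cb:
  assumes w: "\<And>k. w k \<in> walks L i i" and L: "L > 0"
  shows "ray L w \<in> cover_boundary Ed s r i"
  unfolding cover_boundary_def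
proof (intro CollectI conjI allI)
  show "ray L w 0 = []" using ray_paths[where w=w, OF w L, where k=0] by (simp add: paths_to_def)
  fix k
  show "ray L w (Suc k) \<in> all_paths_to Ed s r i"
    using ray_paths[where w=w, OF w L, where k="Suc k"] by (auto simp: all_paths_to_def)
  have ex: "\<exists>e\<in>Ed. ray L w (Suc k) = e # ray L w k \<and> (ray L w k = [] \<longrightarrow> r e = i) \<and>
           (ray L w k \<noteq> [] \<longrightarrow> r e = s (hd (ray L w k)))" by (rule ray_step[where w=w, OF w L])
  then obtain e where e1: "e \<in> Ed" and eQ: "ray L w (Suc k) = e # ray L w k \<and> (ray L w k = [] \<longrightarrow> r e = i) \<and>
           (ray L w k \<noteq> [] \<longrightarrow> r e = s (hd (ray L w k)))" ..
  show "\<exists>e\<in>Ed. ray L w (Suc k) = e # ray L w k" using e1 eQ[THEN conjunct1] by (rule bexI[rotated])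
qed

lemma ray_cyl:
  assumes w: "\<And>k. w k \<in> walks L i i" and w': "\<And>k. w' k \<in> walks L i i" and L: "L > 0"
    and agree: "ray L w n = ray L w' n" and qn: "q * L \<le> n"
  shows "\<forall>k<q. w k = w' k"
proof -
  have "ray L w (q * L) = drop (n - q * L) (ray L w n)"
    by (rule cb_drop[OF ray_cb[where w=w, OF w L] qn])
  moreover have "ray L w' (q * L) = drop (n - q * L) (ray L w' n)"
    by (rule cb_drop[OF ray_cb[where w=w', OF w' L] qn])
  ultimately have "ray L w (q * L) = ray L w' (q * L)" using agree by simp
  moreover have "ray L w (q * L) = pre w q" by (rule ray_block[OF L]) (use walk_facts[OF w L] in auto)
  moreover have "ray L w' (q * L) = pre w' q" by (rule ray_block[OF L]) (use walk_facts[OF w' L] in auto)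
  ultimately have "pre w q = pre w' q" by simp
  moreover have l1: "\<And>k. length (w k) = L" using walk_facts[OF w L] by blast
  moreover have l2: "\<And>k. length (w' k) = L" using walk_facts[OF w' L] by blast
  ultimately show ?thesis using pre_inj[where w=w and w'=w', OF l1 l2] by blast
qed

end


lemma real_key_ineq:
  fixes K :: real and t D :: real and L m :: nat
  assumes K: "K \<ge> 2" and t: "t > 0" and L: "L > 0" and D: "D > 0"
    and tL: "exp (t * real L) \<le> K" and m: "real m \<ge> - ln D"
  shows "(1 / K) ^ (m div L) \<le> K * D powr t"
proof -
  define q where "q = m div L"
  have "m < (q + 1) * L" using L unfolding q_def
    by (metis add.commute div_mult_mod_eq mod_less_divisor mult_Suc nat_add_left_cancel_less plus_1_eq_Suc)
  hence mq: "real m \<le> real (q + 1) * real L" by (metis less_imp_le of_nat_le_iff of_nat_mult)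
  have "exp (t * real m) \<le> exp (t * (real (q + 1) * real L))"
    using mq t by (intro exp_mono mult_left_mono) auto
  also have "\<dots> = exp (t * real L) ^ (q + 1)"
    by (metis exp_of_nat_mult mult.commute mult.left_commute)
  also have "\<dots> \<le> K ^ (q + 1)" using tL by (intro power_mono) auto
  finally have e1: "exp (t * real m) \<le> K ^ (q + 1)" .
  have "exp (- real m) \<le> exp (ln D)" using m by simp
  hence "exp (- real m) \<le> D" using D by simp
  hence "exp (- real m) powr t \<le> D powr t" using t by (intro powr_mono2) auto
  moreover have "exp (- real m) powr t = 1 / exp (t * real m)"
  proof -
    have "exp (- real m) powr t = exp (t * ln (exp (- real m)))"
      by (simp only: powr_def exp_not_eq_zero if_False)
    also have "\<dots> = exp (- (t * real m))" by (simp only: ln_exp) simp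
    also have "\<dots> = 1 / exp (t * real m)" by (simp add: exp_minus inverse_eq_divide)
    finally show ?thesis .
  qed
  ultimately have e2: "1 / exp (t * real m) \<le> D powr t" by simp
  have Kp: "K > 0" using K by simp
  have "1 / K ^ (q + 1) \<le> 1 / exp (t * real m)"
    using e1 Kp by (intro divide_left_mono) auto
  hence "1 / K ^ (q + 1) \<le> D powr t" using e2 by linarith
  hence "K * (1 / K ^ (q + 1)) \<le> K * D powr t" using Kp by (intro mult_left_mono) auto
  moreover have "K * (1 / K ^ (q + 1)) = (1 / K) ^ q" using Kp by (simp add: field_simps)
  ultimately show ?thesis by (simp add: q_def)
qed

context fgraph begin

lemma content_lower:
  assumes iN: "i < N" and L: "L > 0" and K: "card (walks L i i) \<ge> 2"
    and t: "t \<ge> 0" and tL: "exp (t * real L) \<le> real (card (walks L i i))"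
    and cover: "cover_boundary Ed s r i \<subseteq> (\<Union>j. U j)"
    and Usub: "\<And>j. U j \<subseteq> cover_boundary Ed s r i"
    and bdd: "\<And>j. bdd_above ((\<lambda>p. ray_dist (fst p) (snd p)) ` (U j \<times> U j))"
  shows "ennreal (1 / (2 * real (card (walks L i i)))) \<le> (\<Sum>j. diam_pow ray_dist t (U j))"
proof -
  define W where "W = walks L i i"
  define K where "K = card W"
  have finW: "finite W" using walks_card[OF iN] by (simp add: W_def)
  have K2: "K \<ge> 2" using K by (simp add: K_def W_def)
  hence Wne: "W \<noteq> {}" using finW by (auto simp: K_def)
  define Mu where "Mu = uniform_count_measure W"
  define M where "M = PiM (UNIV :: nat set) (\<lambda>_. Mu)"
  have pMu: "prob_space Mu" unfolding Mu_def by (rule prob_space_uniform_count_measure[OF finW Wne])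
  have pM: "prob_space M" unfolding M_def by (rule prob_space_PiM) (use pMu in auto)
  have spM: "space M = {w. \<forall>k. w k \<in> W}"
    by (auto simp: M_def Mu_def space_PiM PiE_UNIV_domain space_uniform_count_measure)
  define Cyl where "Cyl q w0 = prod_emb UNIV (\<lambda>_. Mu) {..<q} (PiE {..<q} (\<lambda>k. {w0 k}))" for q :: nat and w0 :: "nat \<Rightarrow> 'e list"
  have Cyl_mem: "w \<in> Cyl q w0 \<longleftrightarrow> w \<in> space M \<and> (\<forall>k<q. w k = w0 k)" for q w0 w
    by (auto simp: Cyl_def prod_emb_iff M_def space_PiM PiE_UNIV_domain restrict_PiE_iff)
  have Cyl_sets: "Cyl q w0 \<in> sets M" if "w0 \<in> space M" for q w0
    unfolding Cyl_def M_def
    by (rule sets_PiM_I) (use that spM in \<open>auto simp: Mu_def sets_uniform_count_measure\<close>)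
  have Cyl_meas: "emeasure M (Cyl q w0) = ennreal ((1 / real K) ^ q)" if w0: "w0 \<in> space M" for q w0
  proof -
    have "emeasure M (Cyl q w0) = (\<Prod>k\<in>{..<q}. emeasure Mu {w0 k})"
      unfolding M_def Cyl_def
      by (rule emeasure_PiM_emb) (use pMu w0 spM in \<open>auto simp: Mu_def sets_uniform_count_measure\<close>)
    also have "\<dots> = (\<Prod>k\<in>{..<q}. ennreal (1 / real K))"
      using w0 spM finW by (intro prod.cong refl) (auto simp: Mu_def emeasure_uniform_count_measure K_def)
    also have "\<dots> = ennreal ((1 / real K) ^ q)" by (simp add: ennreal_power)
    finally show ?thesis .
  qed
  have wW: "\<And>k. w k \<in> walks L i i" if "w \<in> space M" for w using that spM by (auto simp: W_def)
  have rayS: "ray L w \<in> cover_boundary Ed s r i" if "w \<in> space M" for w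
    by (rule ray_cb[where w=w, OF wW[OF that] L])
  define Y where "Y j = {w \<in> space M. ray L w \<in> U j}" for j
  define eps where "eps j = ennreal ((1/2) ^ Suc (Suc j))" for j :: nat
  have Kpos: "real K > 0" using K2 by simp
  have perj: "\<exists>C. C \<in> sets M \<and> Y j \<subseteq> C \<and> emeasure M C \<le> ennreal (real K) * diam_pow ray_dist t (U j) + eps j" for j
  proof (cases "Y j = {}")
    case True thus ?thesis by (intro exI[of _ "{}"]) auto
  next
    case False
    then obtain w0 where w0: "w0 \<in> Y j" by auto
    hence w0M: "w0 \<in> space M" and w0U: "ray L w0 \<in> U j" by (auto simp: Y_def)
    have Une: "U j \<noteq> {}" using w0U by auto
    show ?thesis
    proof (cases "\<exists>x\<in>U j. \<exists>y\<in>U j. x \<noteq> y")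
      case True
      then obtain x y where xy: "x \<in> U j" "y \<in> U j" "x \<noteq> y" by blast
      define D where "D = set_diam ray_dist (U j)"
      have "ray_dist x y > 0" using xy(3) by (simp add: ray_dist_def)
      hence Dpos: "D > 0" using set_diam_ge[OF bdd xy(1,2)] by (simp add: D_def)
      define m where "m = nat \<lceil>- ln D\<rceil>"
      define q where "q = m div L"
      have mge: "real m \<ge> - ln D" unfolding m_def by linarith
      have sub: "Y j \<subseteq> Cyl q w0"
      proof
        fix w assume w: "w \<in> Y j"
        hence wM: "w \<in> space M" and wU: "ray L w \<in> U j" by (auto simp: Y_def)
        have "ray_dist (ray L w) (ray L w0) \<le> D" using set_diam_ge[OF bdd wU w0U] by (simp add: D_def)
        moreover have "ray L w 0 = ray L w0 0"
          using rayS[OF wM] rayS[OF w0M] by (simp add: cover_boundary_def)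
        ultimately have ag: "\<forall>k\<le>m. ray L w k = ray L w0 k"
          using ray_dist_agree[OF _ Dpos] unfolding m_def by blast
        have "\<forall>k<q. w k = w0 k"
          by (rule ray_cyl[where w=w and w'=w0, OF wW[OF wM] wW[OF w0M] L, of m])
             (use ag in \<open>auto simp: q_def div_times_less_eq_dividend\<close>)
        thus "w \<in> Cyl q w0" using wM by (simp add: Cyl_mem)
      qed
      have "emeasure M (Cyl q w0) \<le> ennreal (real K) * diam_pow ray_dist t (U j)"
      proof (cases "t = 0")
        case True
        have "(1 / real K) ^ q \<le> 1" using Kpos K2 by (intro power_le_one) auto
        also have "1 \<le> real K" using K2 by simp
        finally show ?thesis using True Une Cyl_meas[OF w0M] by (simp add: diam_pow_def)
      next
        case False
        hence tp: "t > 0" using t by simp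
        have "(1 / real K) ^ q \<le> real K * D powr t"
          unfolding q_def
          by (rule real_key_ineq[OF _ tp L Dpos _ mge]) (use K2 tL in \<open>auto simp: K_def W_def\<close>)
        hence "ennreal ((1 / real K) ^ q) \<le> ennreal (real K * D powr t)" by (rule ennreal_leI)
        also have "\<dots> = ennreal (real K) * ennreal (D powr t)" by (simp add: ennreal_mult)
        finally show ?thesis using False Une Cyl_meas[OF w0M] by (simp add: diam_pow_def D_def)
      qed
      hence "emeasure M (Cyl q w0) \<le> ennreal (real K) * diam_pow ray_dist t (U j) + eps j"
        by (metis add.right_neutral add_left_mono order_trans zero_le)
      thus ?thesis using sub Cyl_sets[OF w0M] by blast
    next
      case False
      have sub: "Y j \<subseteq> Cyl (Suc (Suc j)) w0"
      proof
        fix w assume w: "w \<in> Y j"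
        hence wM: "w \<in> space M" and wU: "ray L w \<in> U j" by (auto simp: Y_def)
        have "ray L w = ray L w0" using False wU w0U by blast
        hence "\<forall>k<Suc (Suc j). w k = w0 k"
          by (intro ray_cyl[where w=w and w'=w0, OF wW[OF wM] wW[OF w0M] L, of "Suc (Suc j) * L"]) auto
        thus "w \<in> Cyl (Suc (Suc j)) w0" using wM by (simp add: Cyl_mem)
      qed
      have "(1 / real K) ^ Suc (Suc j) \<le> (1/2) ^ Suc (Suc j)"
        using K2 by (intro power_mono) (auto simp: field_simps)
      hence "emeasure M (Cyl (Suc (Suc j)) w0) \<le> eps j"
        using Cyl_meas[OF w0M] by (simp add: eps_def ennreal_leI)
      hence "emeasure M (Cyl (Suc (Suc j)) w0) \<le> ennreal (real K) * diam_pow ray_dist t (U j) + eps j"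
        by (metis add_increasing zero_le)
      thus ?thesis using sub Cyl_sets[OF w0M] by blast
    qed
  qed
  then obtain C where C: "\<And>j. C j \<in> sets M" "\<And>j. Y j \<subseteq> C j"
    "\<And>j. emeasure M (C j) \<le> ennreal (real K) * diam_pow ray_dist t (U j) + eps j"
    by metis
  have spsub: "space M \<subseteq> (\<Union>j. C j)"
  proof
    fix w assume w: "w \<in> space M"
    then obtain j where "ray L w \<in> U j" using rayS[OF w] cover by blast
    hence "w \<in> Y j" using w by (simp add: Y_def)
    thus "w \<in> (\<Union>j. C j)" using C(2) by blast
  qed
  have epssum: "(\<Sum>j. eps j) = ennreal (1/2)"
  proof -
    have "(\<lambda>j. (1/2::real) ^ Suc (Suc j)) sums ((1/4) * (1 / (1 - 1/2)))"
      using sums_mult[OF geometric_sums[of "1/2::real"], of "1/4"] by (simp add: power_Suc mult.assoc)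
    hence s: "(\<lambda>j. (1/2::real) ^ Suc (Suc j)) sums (1/2)" by simp
    have "(\<Sum>j. eps j) = ennreal (\<Sum>j. (1/2::real) ^ Suc (Suc j))"
      unfolding eps_def by (rule suminf_ennreal2) (use s in \<open>auto simp: sums_iff\<close>)
    also have "(\<Sum>j. (1/2::real) ^ Suc (Suc j)) = 1/2" using s by (rule sums_unique[symmetric])
    hence "ennreal (\<Sum>j. (1/2::real) ^ Suc (Suc j)) = ennreal (1/2)" by (simp only:)
    finally show ?thesis .
  qed
  define X where "X = (\<Sum>j. diam_pow ray_dist t (U j))"
  have "1 = emeasure M (space M)" using prob_space.emeasure_space_1[OF pM] by simp
  also have "\<dots> \<le> emeasure M (\<Union>j. C j)"
    by (rule emeasure_mono[OF spsub]) (use C(1) in auto)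
  also have "\<dots> \<le> (\<Sum>j. emeasure M (C j))"
    by (rule emeasure_subadditive_countably) (use C(1) in auto)
  also have "\<dots> \<le> (\<Sum>j. ennreal (real K) * diam_pow ray_dist t (U j) + eps j)"
    by (rule suminf_le) (use C(3) in \<open>auto intro: summableI\<close>)
  also have "\<dots> = ennreal (real K) * X + ennreal (1/2)"
    by (simp add: suminf_add[symmetric] summableI ennreal_suminf_cmult X_def epssum)
  finally have one: "1 \<le> ennreal (real K) * X + ennreal (1/2)" .
  have "ennreal (1 / (2 * real K)) \<le> X"
  proof (cases X rule: ennreal_cases)
    case (real x)
    have a1: "ennreal (real K) * X = ennreal (real K * x)" using real Kpos by (simp add: ennreal_mult)
    have a2: "ennreal (real K * x) + ennreal (1/2) = ennreal (real K * x + 1/2)"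
      using real Kpos by (intro ennreal_plus[symmetric]) auto
    have "ennreal (real K) * X + ennreal (1/2) = ennreal (real K * x + 1/2)"
      using a1 a2 by simp
    note eq = this
    have "1 \<le> ennreal (real K * x + 1/2)" using one unfolding eq .
    hence "ennreal 1 \<le> ennreal (real K * x + 1/2)" by (simp only: ennreal_1)
    hence "1 \<le> real K * x + 1/2" by (simp only: ennreal_le_iff2) auto
    hence "1 / (2 * real K) \<le> x" using Kpos by (simp add: field_simps)
    thus ?thesis using real by (simp add: ennreal_leI)
  next
    case top thus ?thesis by simp
  qed
  thus ?thesis by (simp add: X_def K_def W_def)
qed

end


context fgraph begin

lemma measure_lower:
  assumes iN: "i < N" and L: "L > 0" and K: "card (walks L i i) \<ge> 2"
    and t: "t \<ge> 0" and tL: "exp (t * real L) \<le> real (card (walks L i i))"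
  shows "ennreal (1 / (2 * real (card (walks L i i)))) \<le> hausdorff_measure ray_dist (cover_boundary Ed s r i) t"
proof -
  have "ennreal (1 / (2 * real (card (walks L i i)))) \<le> hausdorff_content ray_dist (cover_boundary Ed s r i) t 1"
    unfolding hausdorff_content_def
  proof (rule INF_greatest)
    fix U :: "nat \<Rightarrow> (nat \<Rightarrow> 'e list) set" assume "U \<in> {U. cover_boundary Ed s r i \<subseteq> (\<Union>n. U n) \<and>
       (\<forall>n. U n \<subseteq> cover_boundary Ed s r i \<and> bdd_above ((\<lambda>p. ray_dist (fst p) (snd p)) ` (U n \<times> U n)) \<and>
            set_diam ray_dist (U n) \<le> 1)}"
    hence U: "cover_boundary Ed s r i \<subseteq> (\<Union>n. U n)" "\<And>n. U n \<subseteq> cover_boundary Ed s r i"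
      "\<And>n. bdd_above ((\<lambda>p. ray_dist (fst p) (snd p)) ` (U n \<times> U n))" by auto
    show "ennreal (1 / (2 * real (card (walks L i i)))) \<le> (\<Sum>n. diam_pow ray_dist t (U n))"
      by (rule content_lower[OF iN L K t tL U])
  qed
  also have "\<dots> \<le> hausdorff_measure ray_dist (cover_boundary Ed s r i) t"
    unfolding hausdorff_measure_def by (rule SUP_upper) simp
  finally show ?thesis .
qed

lemma dim_lower:
  assumes iN: "i < N" and c: "c > 0" and rho1: "rho \<ge> 1"
    and gr: "\<And>n. \<exists>L\<ge>n. c * rho ^ L \<le> real (P L i i)"
  shows "ereal (ln rho) \<le> hausdorff_dim ray_dist (cover_boundary Ed s r i)"
  unfolding hausdorff_dim_def
proof (rule Inf_greatest)
  fix x assume "x \<in> ereal ` {t. 0 \<le> t \<and> hausdorff_measure ray_dist (cover_boundary Ed s r i) t = 0}"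
  then obtain t where xt: "x = ereal t" and t0: "t \<ge> 0"
    and H0: "hausdorff_measure ray_dist (cover_boundary Ed s r i) t = 0" by auto
  have "ln rho \<le> t"
  proof (rule ccontr)
    assume "\<not> ln rho \<le> t"
    hence tl: "t < ln rho" by simp
    have "exp t < exp (ln rho)" using tl by simp
    hence et: "exp t < rho" using rho1 by simp
    define xr where "xr = rho * exp (- t)"
    have xr1: "xr > 1" using et by (simp add: xr_def exp_minus field_simps)
    obtain n0 where n0: "2 / c < xr ^ n0" using real_arch_pow[OF xr1] by blast
    obtain L where L: "L \<ge> max n0 1" "c * rho ^ L \<le> real (P L i i)" using gr by blast
    have Lp: "L > 0" using L by simp
    have "xr ^ n0 \<le> xr ^ L" using xr1 L by (intro power_increasing) auto
    have rhoL: "rho ^ L = xr ^ L * exp (t * real L)"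
    proof -
      have "rho = xr * exp t" by (simp add: xr_def exp_minus)
      hence "rho ^ L = xr ^ L * exp t ^ L" by (simp add: power_mult_distrib)
      also have "exp t ^ L = exp (t * real L)" by (metis exp_of_nat_mult mult.commute)
      finally show ?thesis .
    qed
    have e1: "exp (t * real L) \<ge> 1" using t0 by simp
    have "2 < c * xr ^ n0" using n0 c by (simp add: field_simps)
    also have "\<dots> \<le> c * xr ^ L" using \<open>xr ^ n0 \<le> xr ^ L\<close> c by simp
    finally have cx: "2 < c * xr ^ L" .
    have "c * xr ^ L * exp (t * real L) \<le> real (P L i i)" using L(2) rhoL by (simp add: mult.assoc)
    moreover have "2 * exp (t * real L) \<le> c * xr ^ L * exp (t * real L)"
      using cx by (intro mult_right_mono) auto
    ultimately have big: "2 * exp (t * real L) \<le> real (P L i i)" by linarith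
    have cardW: "card (walks L i i) = P L i i" using walks_card[OF iN] by blast
    have K2: "card (walks L i i) \<ge> 2" using big e1 cardW by linarith
    have tL: "exp (t * real L) \<le> real (card (walks L i i))" using big e1 cardW by linarith
    have "ennreal (1 / (2 * real (card (walks L i i)))) \<le> hausdorff_measure ray_dist (cover_boundary Ed s r i) t"
      by (rule measure_lower[OF iN Lp K2 t0 tL])
    moreover have "ennreal (1 / (2 * real (card (walks L i i)))) > 0" using K2 by simp
    ultimately show False using H0 by simp
  qed
  thus "ereal (ln rho) \<le> x" using xt by simp
qed

lemma infinite_paths:
  assumes iN: "i < N" and c: "c > 0" and rho1: "rho \<ge> 1"
    and gr: "\<And>n. \<exists>L\<ge>n. c * rho ^ L \<le> real (P L i i)"
  shows "infinite (all_paths_to Ed s r i)"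
proof
  assume fin: "finite (all_paths_to Ed s r i)"
  define B where "B = Max (length ` all_paths_to Ed s r i)"
  obtain L where L: "L \<ge> Suc B" "c * rho ^ L \<le> real (P L i i)" using gr by blast
  have "c * rho ^ L > 0" using c rho1 by simp
  hence "P L i i > 0" using L(2) by linarith
  hence "card (walks L i i) > 0" using walks_card[OF iN] by simp
  then obtain xs where xs: "xs \<in> walks L i i" by (metis card.empty all_not_in_conv less_irrefl)
  hence "xs \<in> paths_to Ed s r L i" by (auto simp: walks_def paths_to_def split: if_splits)
  hence "xs \<in> all_paths_to Ed s r i" by (auto simp: all_paths_to_def)
  hence "length xs \<le> B" using fin by (simp add: B_def)
  moreover have "length xs = L" using xs by (simp add: walks_def)
  ultimately show False using L(1) by simp
qed

end

theorem proposition5p8: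
  fixes N :: nat and Ed :: "'e set" and s r :: "'e \<Rightarrow> nat"
  assumes "finite Ed"
    and "\<forall>e\<in>Ed. s e < N \<and> r e < N"
    and "\<exists>\<mu>. \<mu> \<noteq> [] \<and> graph_path Ed s r \<mu> \<and> s (hd \<mu>) = r (last \<mu>)"
  shows "ereal (ln (spectral_radius (adj_mat N Ed s r)))
           = Max {crit_beta Ed s r v | v. v < N}
       \<and> Max {crit_beta Ed s r v | v. v < N}
           = Max {hausdorff_dim ray_dist (cover_boundary Ed s r v) | v.
                    v < N \<and> infinite (all_paths_to Ed s r v)}"
proof -
  interpret G: fgraph N Ed s r by unfold_locales (use assms in auto)
  have N: "N > 0" and rho1: "G.rho \<ge> 1" using G.cycle_rho[OF assms(3)] by auto
  have rp: "G.rho > 0" using rho1 by simp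
  have rhoeq: "spectral_radius (adj_mat N Ed s r) = G.rho" by (simp add: G.rho_def G.A_def)
  obtain i c where iN: "i < N" and c: "c > 0" and gr: "\<And>n. \<exists>L\<ge>n. c * G.rho ^ L \<le> real (G.P L i i)"
    using G.growth_lower[OF N rho1] by blast
  have Max1: "Max {crit_beta Ed s r v | v. v < N} = ereal (ln G.rho)"
  proof (rule Max_eqI)
    have "{crit_beta Ed s r v | v. v < N} = (\<lambda>v. crit_beta Ed s r v) ` {..<N}" by auto
    thus "finite {crit_beta Ed s r v | v. v < N}" by simp
    fix y assume "y \<in> {crit_beta Ed s r v | v. v < N}"
    then obtain v where "v < N" "y = crit_beta Ed s r v" by auto
    thus "y \<le> ereal (ln G.rho)" using G.crit_le[OF N rp] by simp
  next
    have "crit_beta Ed s r i = ereal (ln G.rho)"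
      using G.crit_le[OF N rp iN] G.crit_ge[OF iN c rho1 gr] by (rule antisym)
    thus "ereal (ln G.rho) \<in> {crit_beta Ed s r v | v. v < N}" using iN by force
  qed
  have Max2: "Max {hausdorff_dim ray_dist (cover_boundary Ed s r v) | v.
                    v < N \<and> infinite (all_paths_to Ed s r v)} = ereal (ln G.rho)"
  proof (rule Max_eqI)
    have "{hausdorff_dim ray_dist (cover_boundary Ed s r v) | v. v < N \<and> infinite (all_paths_to Ed s r v)}
        \<subseteq> (\<lambda>v. hausdorff_dim ray_dist (cover_boundary Ed s r v)) ` {..<N}" by auto
    thus "finite {hausdorff_dim ray_dist (cover_boundary Ed s r v) | v. v < N \<and> infinite (all_paths_to Ed s r v)}"
      by (rule finite_subset) simp
    fix y assume "y \<in> {hausdorff_dim ray_dist (cover_boundary Ed s r v) | v. v < N \<and> infinite (all_paths_to Ed s r v)}"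
    then obtain v where "v < N" "y = hausdorff_dim ray_dist (cover_boundary Ed s r v)" by auto
    thus "y \<le> ereal (ln G.rho)" using G.dim_upper[OF N rho1] by simp
  next
    have "hausdorff_dim ray_dist (cover_boundary Ed s r i) = ereal (ln G.rho)"
      using G.dim_upper[OF N rho1 iN] G.dim_lower[OF iN c rho1 gr] by (rule antisym)
    moreover have "infinite (all_paths_to Ed s r i)" by (rule G.infinite_paths[OF iN c rho1 gr])
    ultimately show "ereal (ln G.rho) \<in> {hausdorff_dim ray_dist (cover_boundary Ed s r v) | v.
                    v < N \<and> infinite (all_paths_to Ed s r v)}" using iN by force
  qed
  show ?thesis using rhoeq Max1 Max2 by simp
qed


end
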